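(* Let $I\subseteq\{1,\dots,n-1\}$ and $r>0$. (1) If $c_1\in(0,\sqrt2-1)$ and $H\le(\sqrt2-1-c_1)\min_{\tau\in I}\frac{r^2nh(\tau)}{\sqrt{2d}}$, then $$\beta^*(\psi_{\mathrm{lin}},\Theta[r],I)\le\sqrt e\exp\Bigl\{-c_1\min_{\tau\in I}\frac{r^2nh(\tau)}{\sqrt{2d}}\Bigr\}.$$ (2) For positive thresholds $T_p$, let $c_2(p,\tau,r)=(1+\sqrt{2/p})^{-1}\frac{r^2nh(\tau)}{T_p\sqrt{2p}}$. Then $$\beta^*(\psi_{\mathrm{scan}},\Theta[r],I)\le\sqrt e\exp\Bigl\{-\min_{p=1,\dots,d}\min_{\tau\in I}\bigl[(c_2(p,\tau,r)-1)T_p\bigr]\Bigr\}.$$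
   Context: Model: for integers $n\ge2$, $d\ge1$ and a fixed baseline mean $\theta\in\mathbb R^d$, we observe independent vectors $X_i=\theta+\Delta\theta_\tau\mathbf 1\{i>\tau\}+\xi_i$, $i=1,\dots,n$, with $\xi_i$ i.i.d. $\mathcal N(0,I_d)$; $\mathbf E_{\Delta\theta_\tau}$ denotes expectation when there is a jump $\Delta\theta_\tau$ at location $\tau$. $V_p^d=\{(\varepsilon_1v_1,\dots,\varepsilon_dv_d):v\in\mathbb R^d,\ \varepsilon_j\in\{0,1\},\ \sum_j\varepsilon_j=p\}$, $\Theta_p[r]=\{v\in V_p^d:\|v\|\ge r\}$, $\Theta[r]=\bigcup_{p=1}^d\Theta_p[r]$, $h(\tau)=\frac\tau n(1-\frac\tau n)$. For $s\in\{1,\dots,n-1\}$, $Z_n(s)=\sqrt{\frac{s(n-s)}n}\bigl(\frac1s\sum_{i=1}^sX_i-\frac1{n-s}\sum_{i=s+1}^nX_i\bigr)$. $\mathcal M(d,p)$ is the family of $p$-element subsets of $\{1,\dots,d\}$; $\Pi_mv$ sets to zero the coordinates of $v$ outside $m$. $L_{\mathrm{lin}}(s)=(\|Z_n(s)\|^2-d)/\sqrt{2d}$, $L_{\mathrm{scan}}(s)=\max_{p=1,\dots,d}\frac1{T_p}\max_{m\in\mathcal M(d,p)}\frac{\|\Pi_mZ_n(s)\|^2-p}{\sqrt{2p}}$. Adaptive tests: $\psi_{\mathrm{lin}}=\mathbf 1\{\max_{s\in I}L_{\mathrm{lin}}(s)>H\}$, $\psi_{\mathrm{scan}}=\mathbf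 1\{\max_{s\in I}L_{\mathrm{scan}}(s)>1\}$. $\beta^*(\psi,\Theta[r],I)=\sup_{\tau\in I}\sup_{\Delta\theta_\tau\in\Theta[r]}\mathbf E_{\Delta\theta_\tau}(1-\psi)$. *)

theory Defs
  imports "HOL-Probability.Probability"
begin

definition noise_space :: "nat \<Rightarrow> nat \<Rightarrow> (nat \<times> nat \<Rightarrow> real) measure" where
  "noise_space n d = PiM ({1..n} \<times> {1..d}) (\<lambda>_. density lborel std_normal_density)"

definition obs :: "(nat \<Rightarrow> real) \<Rightarrow> (nat \<Rightarrow> real) \<Rightarrow> nat \<Rightarrow> (nat \<times> nat \<Rightarrow> real) \<Rightarrow> nat \<Rightarrow> nat \<Rightarrow> real" where
  "obs \<theta> \<Delta> \<tau> \<xi> i j = \<theta> j + (if i > \<tau> then \<Delta> j else 0) + \<xi> (i, j)"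

definition hfun :: "nat \<Rightarrow> nat \<Rightarrow> real" where
  "hfun n \<tau> = (real \<tau> / real n) * (1 - real \<tau> / real n)"

definition Zn :: "nat \<Rightarrow> (nat \<Rightarrow> nat \<Rightarrow> real) \<Rightarrow> nat \<Rightarrow> nat \<Rightarrow> real" where
  "Zn n X s j = sqrt (real s * real (n - s) / real n) *
     ((1 / real s) * (\<Sum>i=1..s. X i j) - (1 / real (n - s)) * (\<Sum>i=s+1..n. X i j))"

definition L_lin :: "nat \<Rightarrow> nat \<Rightarrow> (nat \<Rightarrow> nat \<Rightarrow> real) \<Rightarrow> nat \<Rightarrow> real" where
  "L_lin n d X s = ((\<Sum>j=1..d. (Zn n X s j)\<^sup>2) - real d) / sqrt (2 * real d)"

definition L_scan :: "nat \<Rightarrow> nat \<Rightarrow> (nat \<Rightarrow> real) \<Rightarrow> (nat \<Rightarrow> nat \<Rightarrow> real) \<Rightarrow> nat \<Rightarrow> real" where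
  "L_scan n d T X s = Max ((\<lambda>p. (1 / T p) *
      Max ((\<lambda>m. ((\<Sum>j\<in>m. (Zn n X s j)\<^sup>2) - real p) / sqrt (2 * real p))
           ` {m. m \<subseteq> {1..d} \<and> card m = p})) ` {1..d})"

definition psi_lin :: "nat \<Rightarrow> nat \<Rightarrow> nat set \<Rightarrow> real \<Rightarrow> (nat \<Rightarrow> nat \<Rightarrow> real) \<Rightarrow> real" where
  "psi_lin n d I H X = (if Max ((\<lambda>s. L_lin n d X s) ` I) > H then 1 else 0)"

definition psi_scan :: "nat \<Rightarrow> nat \<Rightarrow> nat set \<Rightarrow> (nat \<Rightarrow> real) \<Rightarrow> (nat \<Rightarrow> nat \<Rightarrow> real) \<Rightarrow> real" where
  "psi_scan n d I T X = (if Max ((\<lambda>s. L_scan n d T X s) ` I) > 1 then 1 else 0)"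

definition Theta :: "nat \<Rightarrow> real \<Rightarrow> (nat \<Rightarrow> real) set" where
  "Theta d r = {v. \<exists>p\<in>{1..d}. \<exists>m. m \<subseteq> {1..d} \<and> card m = p \<and> (\<forall>j. j \<notin> m \<longrightarrow> v j = 0)
                    \<and> sqrt (\<Sum>j=1..d. (v j)\<^sup>2) \<ge> r}"

definition beta_star :: "nat \<Rightarrow> nat \<Rightarrow> (nat \<Rightarrow> real) \<Rightarrow> ((nat \<Rightarrow> nat \<Rightarrow> real) \<Rightarrow> real)
     \<Rightarrow> real \<Rightarrow> nat set \<Rightarrow> real" where
  "beta_star n d \<theta> \<psi> r I = (SUP (\<tau>, \<Delta>) \<in> I \<times> Theta d r.
      (\<integral>\<xi>. 1 - \<psi> (obs \<theta> \<Delta> \<tau> \<xi>) \<partial>(noise_space n d)))"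

end

theory Submission
  imports Defs
begin



abbreviation "NS \<equiv> density lborel std_normal_density"

lemma PiNS_prob: "prob_space (PiM K (\<lambda>_. NS))"
  by (rule prob_space_PiM) (auto intro: prob_space_normal_density)

lemma sets_NS[simp]: "sets NS = sets borel" by simp

lemma coord_distr:
  assumes "k \<in> K"
  shows "distr (PiM K (\<lambda>_. NS)) lborel (\<lambda>\<omega>. \<omega> k) = NS"
proof -
  have "distr (PiM K (\<lambda>_. NS)) lborel (\<lambda>\<omega>. \<omega> k) = distr (PiM K (\<lambda>_. NS)) NS (\<lambda>\<omega>. \<omega> k)"
    by (rule distr_cong) auto
  also have "\<dots> = NS"
    by (rule distr_PiM_component[OF _ assms]) (auto intro: prob_space_normal_density)
  finally show ?thesis .
qed

lemma coord_distributed: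
  assumes "k \<in> K"
  shows "distributed (PiM K (\<lambda>_. NS)) lborel (\<lambda>\<omega>. \<omega> k) std_normal_density"
  unfolding distributed_def using coord_distr[OF assms] assms
  by (auto simp: measurable_component_singleton)

lemma coord_indep:
  assumes "K \<noteq> {}"
  shows "prob_space.indep_vars (PiM K (\<lambda>_. NS)) (\<lambda>_. borel) (\<lambda>k \<omega>. \<omega> k) K"
proof -
  interpret prob_space "PiM K (\<lambda>_. NS)" by (rule PiNS_prob)
  have rv: "\<And>i. i \<in> K \<Longrightarrow> random_variable borel (\<lambda>\<omega>. \<omega> i)"
    by (auto simp: measurable_component_singleton)
  have "distr (PiM K (\<lambda>_. NS)) (PiM K (\<lambda>_. borel)) (\<lambda>x. \<lambda>i\<in>K. x i) =
        distr (PiM K (\<lambda>_. NS)) (PiM K (\<lambda>_. NS)) (\<lambda>x. x)"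
    by (rule distr_cong) (auto intro!: sets_PiM_cong simp: space_PiM PiE_def extensional_restrict)
  also have "\<dots> = PiM K (\<lambda>_. NS)" by simp
  also have "\<dots> = PiM K (\<lambda>i. distr (PiM K (\<lambda>_. NS)) borel (\<lambda>x. x i))"
  proof (rule PiM_cong[OF refl])
    fix i assume "i \<in> K"
    have "distr (PiM K (\<lambda>_. NS)) borel (\<lambda>x. x i) = distr (PiM K (\<lambda>_. NS)) lborel (\<lambda>x. x i)"
      by (rule distr_cong) auto
    then show "NS = distr (PiM K (\<lambda>_. NS)) borel (\<lambda>x. x i)" using coord_distr[OF \<open>i\<in>K\<close>] by simp
  qed
  finally show ?thesis
    by (subst indep_vars_iff_distr_eq_PiM'[OF assms rv]) auto
qed




lemma e0: fixes x l mu q :: real assumes q: "q > 0" and qd: "q = 1 + 2*l"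
 shows "- x\<^sup>2 / 2 + - l * (mu + x)\<^sup>2 = - l * mu\<^sup>2 / q + - (q*x + 2*l*mu)\<^sup>2 / (2*q)"
proof -
  have a: "2*q*(- l * mu\<^sup>2 / q + - (q*x + 2*l*mu)\<^sup>2 / (2*q)) = -2*l*mu\<^sup>2 - (q*x + 2*l*mu)\<^sup>2"
      using q by (simp add: field_simps)
  have b: "2*q*(- x\<^sup>2 / 2 + - l * (mu + x)\<^sup>2) = -2*l*mu\<^sup>2 - (q*x + 2*l*mu)\<^sup>2"
      unfolding qd by (simp add: power2_eq_square algebra_simps)
  from a b have "2*q*(- x\<^sup>2 / 2 + - l * (mu + x)\<^sup>2) = 2*q*(- l * mu\<^sup>2 / q + - (q*x + 2*l*mu)\<^sup>2 / (2*q))" by simp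
  then show ?thesis using q by simp
qed

lemma gauss_pointwise:
  fixes l mu x :: real
  assumes l: "l > 0"
  shows "std_normal_density x * exp (- l * (mu + x)\<^sup>2) =
    (1 / sqrt (1 + 2*l) * exp (- l * mu\<^sup>2 / (1 + 2*l))) *
      normal_density (- 2*l*mu/(1+2*l)) (1 / sqrt (1 + 2*l)) x"
proof -
  define q where "q = 1 + 2*l"
  have q: "q > 0" using l by (simp add: q_def)
  have sq: "(1 / sqrt q)\<^sup>2 = 1/q" using q by (simp add: power_divide)
  have e1: "(x - (- 2*l*mu/q))\<^sup>2 / (2 * (1/q)) = (q*x + 2*l*mu)\<^sup>2 / (2*q)"
  proof -
    have "x - (- 2*l*mu/q) = (q*x + 2*l*mu)/q" using q by (simp add: field_simps)
    then have "(x - (- 2*l*mu/q))\<^sup>2 = (q*x + 2*l*mu)\<^sup>2/q\<^sup>2" by (simp add: power_divide)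
    then show ?thesis using q by (simp add: power2_eq_square)
  qed
  have s: "1 / sqrt (2 * pi * (1 / q)) = sqrt q / sqrt (2*pi)"
  proof -
    have "sqrt (2 * pi * (1 / q)) = sqrt (2*pi) / sqrt q" by (simp add: real_sqrt_divide)
    then show ?thesis by simp
  qed
  have "std_normal_density x * exp (- l * (mu + x)\<^sup>2) = 1 / sqrt (2*pi) * exp (- x\<^sup>2 / 2 + - l * (mu + x)\<^sup>2)"
    unfolding std_normal_density_def exp_add by simp
  also have "\<dots> = 1 / sqrt (2*pi) * exp (- l * mu\<^sup>2 / q + - (x - (- 2*l*mu/q))\<^sup>2 / (2 * (1/q)))"
    using e1 e0[OF q q_def] by (metis minus_divide_left)
  also have "\<dots> = (1 / sqrt q * exp (- l * mu\<^sup>2 / q)) * normal_density (- 2*l*mu/q) (1 / sqrt q) x"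
    unfolding normal_density_def sq s exp_add using q by (simp add: field_simps)
  finally show ?thesis unfolding q_def .
qed

lemma gauss_nn:
  fixes l mu :: real
  assumes l: "l > 0"
  shows "(\<integral>\<^sup>+x. ennreal (std_normal_density x) * ennreal (exp (- l * (mu + x)\<^sup>2)) \<partial>lborel) =
    ennreal (1 / sqrt (1 + 2*l) * exp (- l * mu\<^sup>2 / (1 + 2*l)))"
proof -
  let ?C = "1 / sqrt (1 + 2*l) * exp (- l * mu\<^sup>2 / (1 + 2*l))"
  have "(\<integral>\<^sup>+x. ennreal (std_normal_density x) * ennreal (exp (- l * (mu + x)\<^sup>2)) \<partial>lborel) =
     (\<integral>\<^sup>+x. ennreal ?C * ennreal (normal_density (- 2*l*mu/(1+2*l)) (1 / sqrt (1 + 2*l)) x) \<partial>lborel)"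
  proof (intro nn_integral_cong)
    fix x
    have "ennreal (std_normal_density x) * ennreal (exp (- l * (mu + x)\<^sup>2)) = ennreal (std_normal_density x * exp (- l * (mu + x)\<^sup>2))"
      by (rule ennreal_mult[symmetric]) auto
    also have "\<dots> = ennreal (?C * normal_density (- 2*l*mu/(1+2*l)) (1 / sqrt (1 + 2*l)) x)"
      unfolding gauss_pointwise[OF l] ..
    also have "\<dots> = ennreal ?C * ennreal (normal_density (- 2*l*mu/(1+2*l)) (1 / sqrt (1 + 2*l)) x)"
      by (rule ennreal_mult) (use l in \<open>auto intro!: divide_nonneg_pos\<close>)
    finally show "ennreal (std_normal_density x) * ennreal (exp (- l * (mu + x)\<^sup>2)) = ennreal ?C * ennreal (normal_density (- 2*l*mu/(1+2*l)) (1 / sqrt (1 + 2*l)) x)" .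
  qed
  also have "\<dots> = ennreal ?C * (\<integral>\<^sup>+x. ennreal (normal_density (- 2*l*mu/(1+2*l)) (1 / sqrt (1 + 2*l)) x) \<partial>lborel)"
    by (rule nn_integral_cmult) simp
  also have "(\<integral>\<^sup>+x. ennreal (normal_density (- 2*l*mu/(1+2*l)) (1 / sqrt (1 + 2*l)) x) \<partial>lborel) = 1"
    using l by (subst nn_integral_eq_integral) (auto simp: normal_density_nonneg)
  finally show ?thesis by simp
qed



definition cc :: "nat \<Rightarrow> nat \<Rightarrow> real" where
  "cc n \<tau> = sqrt (real \<tau> * real (n - \<tau>) / real n)"

definition bcoef :: "nat \<Rightarrow> nat \<Rightarrow> nat \<times> nat \<Rightarrow> real" where
  "bcoef n \<tau> k = (if fst k \<le> \<tau> then cc n \<tau> / real \<tau> else - cc n \<tau> / real (n - \<tau>))"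

definition Wf :: "nat \<Rightarrow> nat \<Rightarrow> nat \<Rightarrow> (nat \<times> nat \<Rightarrow> real) \<Rightarrow> real" where
  "Wf n \<tau> j \<omega> = (\<Sum>k\<in>{1..n}\<times>{j}. bcoef n \<tau> k * \<omega> k)"

lemma cc_pos: "1 \<le> \<tau> \<Longrightarrow> \<tau> < n \<Longrightarrow> cc n \<tau> > 0"
  unfolding cc_def by (auto intro!: divide_pos_pos mult_pos_pos)

lemma cc_sq: "1 \<le> \<tau> \<Longrightarrow> \<tau> < n \<Longrightarrow> (cc n \<tau>)\<^sup>2 = real n * hfun n \<tau>"
  unfolding cc_def hfun_def by (simp add: of_nat_diff field_simps power2_eq_square)

lemma bcoef_nz: "1 \<le> \<tau> \<Longrightarrow> \<tau> < n \<Longrightarrow> bcoef n \<tau> k \<noteq> 0"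
  using cc_pos[of \<tau> n] unfolding bcoef_def by auto

lemma sum_singleton_prod: "(\<Sum>k\<in>A\<times>{j}. f k) = (\<Sum>i\<in>A. f (i, j))"
proof -
  have "A \<times> {j} = (\<lambda>i. (i, j)) ` A" by auto
  moreover have "inj_on (\<lambda>i. (i, j)) A" by (auto simp: inj_on_def)
  ultimately show ?thesis by (simp add: sum.reindex)
qed

lemma split_sum_tau:
  fixes n \<tau> :: nat
  assumes "\<tau> \<le> n"
  shows "(\<Sum>i=1..n. f i) = (\<Sum>i=1..\<tau>. f i) + (\<Sum>i=\<tau>+1..n. f i)"
proof -
  have "(\<Sum>i=1..\<tau> + (n - \<tau>). f i) = (\<Sum>i=1..\<tau>. f i) + (\<Sum>i=\<tau>+1..\<tau> + (n - \<tau>). f i)"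
    by (rule sum.ub_add_nat) simp
  then show ?thesis using assms by simp
qed

lemma bcoef_sq_sum:
  assumes "1 \<le> \<tau>" "\<tau> < n"
  shows "(\<Sum>k\<in>{1..n}\<times>{j}. (bcoef n \<tau> k)\<^sup>2) = 1"
proof -
  have "(\<Sum>k\<in>{1..n}\<times>{j}. (bcoef n \<tau> k)\<^sup>2) = (\<Sum>i=1..n. (bcoef n \<tau> (i,j))\<^sup>2)"
    by (rule sum_singleton_prod)
  also have "\<dots> = (\<Sum>i=1..\<tau>. (bcoef n \<tau> (i,j))\<^sup>2) + (\<Sum>i=\<tau>+1..n. (bcoef n \<tau> (i,j))\<^sup>2)"
    using assms by (intro split_sum_tau) simp
  also have "(\<Sum>i=1..\<tau>. (bcoef n \<tau> (i,j))\<^sup>2) = real \<tau> * (cc n \<tau> / real \<tau>)\<^sup>2"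
    by (simp add: bcoef_def)
  also have "(\<Sum>i=\<tau>+1..n. (bcoef n \<tau> (i,j))\<^sup>2) = real (n - \<tau>) * (cc n \<tau> / real (n - \<tau>))\<^sup>2"
    using assms by (simp add: bcoef_def of_nat_diff)
  also have "real \<tau> * (cc n \<tau> / real \<tau>)\<^sup>2 + real (n - \<tau>) * (cc n \<tau> / real (n - \<tau>))\<^sup>2 = 1"
  proof -
    define T where "T = real \<tau>"
    define R where "R = real (n - \<tau>)"
    have TR: "real n = T + R" unfolding T_def R_def using assms by (simp add: of_nat_diff)
    have T: "T > 0" and R: "R > 0" unfolding T_def R_def using assms by auto
    have c2: "(cc n \<tau>)\<^sup>2 = T * R / (T + R)"
      unfolding cc_def T_def[symmetric] R_def[symmetric] TR[symmetric] using T R TR by simp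
    have a: "T * (cc n \<tau> / T)\<^sup>2 = R / (T + R)"
    proof -
      have "T * (cc n \<tau> / T)\<^sup>2 = (cc n \<tau>)\<^sup>2 / T" using T by (simp add: power2_eq_square field_simps)
      also have "\<dots> = R / (T + R)" unfolding c2 using T R by simp
      finally show ?thesis .
    qed
    have b: "R * (cc n \<tau> / R)\<^sup>2 = T / (T + R)"
    proof -
      have "R * (cc n \<tau> / R)\<^sup>2 = (cc n \<tau>)\<^sup>2 / R" using R by (simp add: power2_eq_square field_simps)
      also have "\<dots> = T / (T + R)" unfolding c2 using T R by simp
      finally show ?thesis .
    qed
    have "R / (T + R) + T / (T + R) = (R + T) / (T + R)" by (simp add: add_divide_distrib)
    also have "\<dots> = 1" using T R by simp
    finally show ?thesis unfolding T_def[symmetric] R_def[symmetric] a b .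
  qed
  finally show ?thesis .
qed

lemma Zn_obs:
  assumes "1 \<le> \<tau>" "\<tau> < n"
  shows "Zn n (obs \<theta> \<Delta> \<tau> \<xi>) \<tau> j = - cc n \<tau> * \<Delta> j + Wf n \<tau> j \<xi>"
proof -
  have t0: "real \<tau> > 0" and t1: "real (n - \<tau>) > 0" using assms by auto
  have s1: "(\<Sum>i=1..\<tau>. obs \<theta> \<Delta> \<tau> \<xi> i j) = real \<tau> * \<theta> j + (\<Sum>i=1..\<tau>. \<xi> (i, j))"
    by (simp add: obs_def sum.distrib)
  have s2: "(\<Sum>i=\<tau>+1..n. obs \<theta> \<Delta> \<tau> \<xi> i j) = real (n - \<tau>) * (\<theta> j + \<Delta> j) + (\<Sum>i=\<tau>+1..n. \<xi> (i, j))"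
    by (simp add: obs_def sum.distrib algebra_simps)
  have w: "Wf n \<tau> j \<xi> = cc n \<tau> / real \<tau> * (\<Sum>i=1..\<tau>. \<xi> (i, j)) - cc n \<tau> / real (n - \<tau>) * (\<Sum>i=\<tau>+1..n. \<xi> (i, j))"
  proof -
    have "Wf n \<tau> j \<xi> = (\<Sum>i=1..n. bcoef n \<tau> (i,j) * \<xi> (i,j))"
      unfolding Wf_def by (rule sum_singleton_prod)
    also have "\<dots> = (\<Sum>i=1..\<tau>. bcoef n \<tau> (i,j) * \<xi> (i,j)) + (\<Sum>i=\<tau>+1..n. bcoef n \<tau> (i,j) * \<xi> (i,j))"
      using assms by (intro split_sum_tau) simp
    also have "(\<Sum>i=1..\<tau>. bcoef n \<tau> (i,j) * \<xi> (i,j)) = cc n \<tau> / real \<tau> * (\<Sum>i=1..\<tau>. \<xi> (i, j))"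
      by (simp add: bcoef_def sum_distrib_left)
    also have "(\<Sum>i=\<tau>+1..n. bcoef n \<tau> (i,j) * \<xi> (i,j)) = - (cc n \<tau> / real (n - \<tau>) * (\<Sum>i=\<tau>+1..n. \<xi> (i, j)))"
      by (simp add: bcoef_def sum_distrib_left sum_negf)
    finally show ?thesis by simp
  qed
  show ?thesis
    unfolding Zn_def s1 s2 w cc_def[symmetric] using t0 t1
    by (simp add: field_simps)
qed




lemma noise_prob: "prob_space (noise_space n d)"
  unfolding noise_space_def by (rule PiNS_prob)

lemma W_distributed:
  assumes tau: "1 \<le> \<tau>" "\<tau> < n" and j: "j \<in> {1..d}"
  shows "distributed (noise_space n d) lborel (Wf n \<tau> j) std_normal_density"
proof -
  interpret prob_space "noise_space n d" by (rule noise_prob)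
  let ?K = "{1..n}\<times>{1..d}"
  let ?L = "{1..n}\<times>{j}"
  have LK: "?L \<subseteq> ?K" using j by auto
  have Kne: "?K \<noteq> {}" using tau j by auto
  have Lne: "?L \<noteq> {}" using tau by auto
  have ind0: "indep_vars (\<lambda>_. borel) (\<lambda>k \<omega>. \<omega> k) ?L"
  proof -
    have ci: "indep_vars (\<lambda>_. borel) (\<lambda>k \<omega>. \<omega> k) ?K"
      using coord_indep[OF Kne] unfolding noise_space_def .
    show ?thesis using indep_vars_subset[OF ci LK] .
  qed
  have ind: "indep_vars (\<lambda>_. borel) (\<lambda>k \<omega>. bcoef n \<tau> k * \<omega> k) ?L"
    using indep_vars_compose2[OF ind0, of "\<lambda>k x. bcoef n \<tau> k * x" "\<lambda>_. borel"] by simp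
  have dist: "distributed (noise_space n d) lborel (\<lambda>\<omega>. bcoef n \<tau> k * \<omega> k) (normal_density 0 \<bar>bcoef n \<tau> k\<bar>)"
    if k: "k \<in> ?L" for k
  proof -
    have "k \<in> ?K" using k LK by blast
    then have c: "distributed (noise_space n d) lborel (\<lambda>\<omega>. \<omega> k) (normal_density 0 1)"
      using coord_distributed[of k ?K] unfolding noise_space_def by simp
    have "distributed (noise_space n d) lborel (\<lambda>\<omega>. 0 + bcoef n \<tau> k * \<omega> k)
            (normal_density (0 + bcoef n \<tau> k * 0) (\<bar>bcoef n \<tau> k\<bar> * 1))"
      by (rule normal_density_affine[OF c]) (use bcoef_nz[OF tau] in auto)
    then show ?thesis by simp
  qed
  have "distributed (noise_space n d) lborel (\<lambda>x. \<Sum>k\<in>?L. bcoef n \<tau> k * x k)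
          (normal_density (\<Sum>k\<in>?L. 0) (sqrt (\<Sum>k\<in>?L. \<bar>bcoef n \<tau> k\<bar>\<^sup>2)))"
    by (rule sum_indep_normal[OF _ Lne ind]) (use bcoef_nz[OF tau] dist in auto)
  moreover have "(\<Sum>k\<in>?L. \<bar>bcoef n \<tau> k\<bar>\<^sup>2) = 1" using bcoef_sq_sum[OF tau] by simp
  ultimately show ?thesis unfolding Wf_def[abs_def] by simp
qed

lemma W_indep:
  assumes tau: "1 \<le> \<tau>" "\<tau> < n" and J: "J \<subseteq> {1..d}"
  shows "prob_space.indep_vars (noise_space n d) (\<lambda>_. borel)
           (\<lambda>j \<omega>. exp (- l * (mu j + Wf n \<tau> j \<omega>)\<^sup>2)) J"
proof (cases "J = {}")
  case True
  interpret prob_space "noise_space n d" by (rule noise_prob)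
  show ?thesis using True by (simp add: indep_vars_def indep_sets_def)
next
  case False
  interpret prob_space "noise_space n d" by (rule noise_prob)
  let ?K = "{1..n}\<times>{1..d}"
  have Kne: "?K \<noteq> {}" using tau J False by auto
  have r: "indep_vars (\<lambda>j. PiM ({1..n}\<times>{j}) (\<lambda>_. borel))
       (\<lambda>j \<omega>. restrict (\<lambda>i. \<omega> i) ({1..n}\<times>{j})) J"
  proof -
    have ci: "indep_vars (\<lambda>_. borel) (\<lambda>k \<omega>. \<omega> k) ?K"
      using coord_indep[OF Kne] unfolding noise_space_def .
    show ?thesis using indep_vars_restrict[OF ci, of J "\<lambda>j. {1..n}\<times>{j}"] J
      by (auto simp: disjoint_family_on_def)
  qed
  let ?Y = "\<lambda>j x. exp (- l * (mu j + (\<Sum>k\<in>{1..n}\<times>{j}. bcoef n \<tau> k * x k))\<^sup>2)"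
  have m: "?Y j \<in> borel_measurable (PiM ({1..n}\<times>{j}) (\<lambda>_. borel))" for j
    by measurable
  have "indep_vars (\<lambda>_. borel) (\<lambda>j \<omega>. ?Y j (restrict (\<lambda>i. \<omega> i) ({1..n}\<times>{j}))) J"
    by (rule indep_vars_compose2[OF r]) (rule m)
  moreover have "(\<lambda>\<omega>. ?Y j (restrict (\<lambda>i. \<omega> i) ({1..n}\<times>{j}))) = (\<lambda>\<omega>. exp (- l * (mu j + Wf n \<tau> j \<omega>)\<^sup>2))" for j
    unfolding Wf_def by (intro ext) (auto intro!: sum.cong)
  ultimately show ?thesis by simp
qed

lemma chern_nn:
  assumes tau: "1 \<le> \<tau>" "\<tau> < n" and J: "J \<subseteq> {1..d}" and l: "l > 0"
  shows "(\<integral>\<^sup>+\<omega>. ennreal (\<Prod>j\<in>J. exp (- l * (mu j + Wf n \<tau> j \<omega>)\<^sup>2)) \<partial>noise_space n d) =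
         ennreal (\<Prod>j\<in>J. 1 / sqrt (1 + 2*l) * exp (- l * (mu j)\<^sup>2 / (1 + 2*l)))"
proof -
  interpret prob_space "noise_space n d" by (rule noise_prob)
  have fin: "finite J" using J finite_subset by blast
  have "(\<integral>\<^sup>+\<omega>. ennreal (\<Prod>j\<in>J. exp (- l * (mu j + Wf n \<tau> j \<omega>)\<^sup>2)) \<partial>noise_space n d) =
        (\<integral>\<^sup>+\<omega>. (\<Prod>j\<in>J. ennreal (exp (- l * (mu j + Wf n \<tau> j \<omega>)\<^sup>2))) \<partial>noise_space n d)"
    by (intro nn_integral_cong) (simp add: prod_ennreal)
  also have "\<dots> = (\<Prod>j\<in>J. \<integral>\<^sup>+\<omega>. ennreal (exp (- l * (mu j + Wf n \<tau> j \<omega>)\<^sup>2)) \<partial>noise_space n d)"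
  proof (rule indep_vars_nn_integral[OF fin])
    show "indep_vars (\<lambda>_. borel) (\<lambda>j \<omega>. ennreal (exp (- l * (mu j + Wf n \<tau> j \<omega>)\<^sup>2))) J"
      using indep_vars_compose2[OF W_indep[OF tau J, of l mu], of "\<lambda>_ x. ennreal x" "\<lambda>_. borel"] by simp
  qed simp
  also have "\<dots> = (\<Prod>j\<in>J. ennreal (1 / sqrt (1 + 2*l) * exp (- l * (mu j)\<^sup>2 / (1 + 2*l))))"
  proof (rule prod.cong[OF refl])
    fix j assume "j \<in> J"
    then have jd: "j \<in> {1..d}" using J by auto
    have "(\<integral>\<^sup>+\<omega>. ennreal (exp (- l * (mu j + Wf n \<tau> j \<omega>)\<^sup>2)) \<partial>noise_space n d) =
          (\<integral>\<^sup>+x. ennreal (std_normal_density x) * ennreal (exp (- l * (mu j + x)\<^sup>2)) \<partial>lborel)"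
      by (rule distributed_nn_integral[OF W_distributed[OF tau jd], symmetric]) simp
    also have "\<dots> = ennreal (1 / sqrt (1 + 2*l) * exp (- l * (mu j)\<^sup>2 / (1 + 2*l)))"
      by (rule gauss_nn[OF l])
    finally show "(\<integral>\<^sup>+\<omega>. ennreal (exp (- l * (mu j + Wf n \<tau> j \<omega>)\<^sup>2)) \<partial>noise_space n d) =
          ennreal (1 / sqrt (1 + 2*l) * exp (- l * (mu j)\<^sup>2 / (1 + 2*l)))" .
  qed
  also have "\<dots> = ennreal (\<Prod>j\<in>J. 1 / sqrt (1 + 2*l) * exp (- l * (mu j)\<^sup>2 / (1 + 2*l)))"
    using l by (intro prod_ennreal) simp
  finally show ?thesis .
qed




lemma chern_int:
  assumes tau: "1 \<le> \<tau>" "\<tau> < n" and J: "J \<subseteq> {1..d}" and l: "l > 0"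
    and f0: "\<And>\<omega>. 0 \<le> f \<omega>" and f1: "\<And>\<omega>. f \<omega> \<le> 1"
    and fa: "\<And>\<omega>. f \<omega> \<noteq> 0 \<Longrightarrow> (\<Sum>j\<in>J. (mu j + Wf n \<tau> j \<omega>)\<^sup>2) \<le> a"
  shows "integral\<^sup>L (noise_space n d) f \<le>
     exp (l * a) * (\<Prod>j\<in>J. 1 / sqrt (1 + 2*l) * exp (- l * (mu j)\<^sup>2 / (1 + 2*l)))"
proof -
  let ?B = "exp (l * a) * (\<Prod>j\<in>J. 1 / sqrt (1 + 2*l) * exp (- l * (mu j)\<^sup>2 / (1 + 2*l)))"
  let ?g = "\<lambda>\<omega>. \<Prod>j\<in>J. exp (- l * (mu j + Wf n \<tau> j \<omega>)\<^sup>2)"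
  have fpos: "0 \<le> 1 / sqrt (1 + 2*l) * exp (- l * (mu j)\<^sup>2 / (1 + 2*l))" for j
    using l by (intro mult_nonneg_nonneg) auto
  have Ppos: "0 \<le> (\<Prod>j\<in>J. 1 / sqrt (1 + 2*l) * exp (- l * (mu j)\<^sup>2 / (1 + 2*l)))"
    by (rule prod_nonneg) (use fpos in blast)
  have Bpos: "0 \<le> ?B" using Ppos by simp
  have pw: "f \<omega> \<le> exp (l * a) * ?g \<omega>" for \<omega>
  proof (cases "f \<omega> = 0")
    case True then show ?thesis by (simp add: prod_nonneg)
  next
    case False
    have "?g \<omega> = exp (- l * (\<Sum>j\<in>J. (mu j + Wf n \<tau> j \<omega>)\<^sup>2))"
      using finite_subset[OF J] by (simp add: exp_sum sum_distrib_left)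
    then have "exp (l * a) * ?g \<omega> = exp (l * (a - (\<Sum>j\<in>J. (mu j + Wf n \<tau> j \<omega>)\<^sup>2)))"
      by (simp add: exp_add[symmetric] algebra_simps)
    moreover have "l * (a - (\<Sum>j\<in>J. (mu j + Wf n \<tau> j \<omega>)\<^sup>2)) \<ge> 0"
      using fa[OF False] l by simp
    ultimately have "exp (l * a) * ?g \<omega> \<ge> 1" by simp
    then show ?thesis using f1[of \<omega>] by linarith
  qed
  have gm: "?g \<in> borel_measurable (noise_space n d)"
  proof (rule borel_measurable_prod)
    fix j assume "j \<in> J"
    then have "j \<in> {1..d}" using J by auto
    then have [measurable]: "Wf n \<tau> j \<in> borel_measurable (noise_space n d)"
      using W_distributed[OF tau] unfolding distributed_def by auto
    show "(\<lambda>\<omega>. exp (- l * (mu j + Wf n \<tau> j \<omega>)\<^sup>2)) \<in> borel_measurable (noise_space n d)"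
      by measurable
  qed
  show ?thesis
  proof (cases "integrable (noise_space n d) f")
    case False
    then show ?thesis using Bpos by (simp add: not_integrable_integral_eq)
  next
    case True
    have "integral\<^sup>L (noise_space n d) f = enn2real (\<integral>\<^sup>+\<omega>. ennreal (f \<omega>) \<partial>noise_space n d)"
      by (rule integral_eq_nn_integral) (use True f0 in auto)
    also have "\<dots> \<le> ?B"
    proof (rule enn2real_leI[OF Bpos])
      have "(\<integral>\<^sup>+\<omega>. ennreal (f \<omega>) \<partial>noise_space n d) \<le> (\<integral>\<^sup>+\<omega>. ennreal (exp (l * a)) * ennreal (?g \<omega>) \<partial>noise_space n d)"
      proof (rule nn_integral_mono)
        fix \<omega>
        have "ennreal (f \<omega>) \<le> ennreal (exp (l * a) * ?g \<omega>)" using pw[of \<omega>] by (rule ennreal_leI)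
        also have "\<dots> = ennreal (exp (l * a)) * ennreal (?g \<omega>)"
          by (rule ennreal_mult) (auto intro: prod_nonneg)
        finally show "ennreal (f \<omega>) \<le> ennreal (exp (l * a)) * ennreal (?g \<omega>)" .
      qed
      also have "\<dots> = ennreal (exp (l * a)) * (\<integral>\<^sup>+\<omega>. ennreal (?g \<omega>) \<partial>noise_space n d)"
        by (rule nn_integral_cmult) (use gm in simp)
      also have "\<dots> = ennreal (exp (l * a)) * ennreal (\<Prod>j\<in>J. 1 / sqrt (1 + 2*l) * exp (- l * (mu j)\<^sup>2 / (1 + 2*l)))"
        unfolding chern_nn[OF tau J l] ..
      also have "\<dots> = ennreal ?B"
        by (rule ennreal_mult[symmetric]) (use Ppos in auto)
      finally show "(\<integral>\<^sup>+\<omega>. ennreal (f \<omega>) \<partial>noise_space n d) \<le> ennreal ?B" .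
    qed
    finally show ?thesis .
  qed
qed




lemma ln_lower2:
  fixes x :: real assumes x: "0 \<le> x"
  shows "x - x\<^sup>2 / 2 \<le> ln (1 + x)"
proof -
  let ?f = "\<lambda>t::real. ln (1 + t) - t + t\<^sup>2 / 2"
  have "?f 0 \<le> ?f x"
  proof (rule DERIV_nonneg_imp_increasing_open[OF x])
    fix t :: real assume t: "0 < t" "t < x"
    have "DERIV ?f t :> (1 / (1 + t) - 1 + t)"
      using t by (auto intro!: derivative_eq_intros simp: power2_eq_square field_simps)
    moreover have "1 / (1 + t) - 1 + t \<ge> 0"
    proof -
      have "1 / (1 + t) - 1 + t = t\<^sup>2 / (1 + t)" using t by (simp add: field_simps power2_eq_square)
      then show ?thesis using t by simp
    qed
    ultimately show "\<exists>y. DERIV ?f t :> y \<and> y \<ge> 0" by blast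
  next
    show "continuous_on {0..x} ?f"
      by (intro continuous_intros) auto
  qed
  then show ?thesis by simp
qed

lemma inv_sqrt_pow:
  fixes l :: real assumes l: "l > 0"
  shows "(1 / sqrt (1 + 2*l)) ^ k \<le> exp (- real k * l + real k * l\<^sup>2)"
proof -
  have q: "1 + 2*l > 0" using l by simp
  have "sqrt (1 + 2*l) = exp (ln (1 + 2*l) / 2)"
  proof -
    have "sqrt (1 + 2*l) = (1 + 2*l) powr (1/2)" using q by (simp add: powr_half_sqrt)
    also have "\<dots> = exp (ln (1 + 2*l) / 2)" using q by (simp add: powr_def)
    finally show ?thesis .
  qed
  then have "(1 / sqrt (1 + 2*l)) ^ k = 1 / exp (ln (1 + 2*l) / 2) ^ k"
    by (simp add: power_one_over)
  also have "\<dots> = 1 / exp (real k * (ln (1 + 2*l) / 2))"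
    by (simp only: exp_of_nat_mult)
  also have "\<dots> = exp (real k * (- ln (1 + 2*l) / 2))"
    by (simp add: exp_minus inverse_eq_divide)
  also have "\<dots> \<le> exp (- real k * l + real k * l\<^sup>2)"
  proof -
    have "2*l - (2*l)\<^sup>2 / 2 \<le> ln (1 + 2*l)" using ln_lower2[of "2*l"] l by simp
    then have "l - l\<^sup>2 \<le> ln (1 + 2*l) / 2" by (simp add: power2_eq_square)
    then have "real k * (l - l\<^sup>2) \<le> real k * (ln (1 + 2*l) / 2)" by (rule mult_left_mono) simp
    then show ?thesis by (simp add: algebra_simps)
  qed
  finally show ?thesis .
qed

lemma chern_exp:
  assumes tau: "1 \<le> \<tau>" "\<tau> < n" and J: "J \<subseteq> {1..d}" and l: "l > 0"
    and f0: "\<And>\<omega>. 0 \<le> f \<omega>" and f1: "\<And>\<omega>. f \<omega> \<le> 1"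
    and fa: "\<And>\<omega>. f \<omega> \<noteq> 0 \<Longrightarrow> (\<Sum>j\<in>J. (mu j + Wf n \<tau> j \<omega>)\<^sup>2) \<le> a"
  shows "integral\<^sup>L (noise_space n d) f \<le>
     exp (l * a - real (card J) * l + real (card J) * l\<^sup>2 - l * (\<Sum>j\<in>J. (mu j)\<^sup>2) / (1 + 2*l))"
proof -
  have fin: "finite J" using J finite_subset by blast
  let ?q = "1 + 2*l"
  have q: "?q > 0" using l by simp
  have P: "(\<Prod>j\<in>J. 1 / sqrt ?q * exp (- l * (mu j)\<^sup>2 / ?q)) =
      (1 / sqrt ?q) ^ card J * exp (- l * (\<Sum>j\<in>J. (mu j)\<^sup>2) / ?q)"
  proof -
    have "(\<Prod>j\<in>J. 1 / sqrt ?q * exp (- l * (mu j)\<^sup>2 / ?q)) =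
        (\<Prod>j\<in>J. 1 / sqrt ?q) * (\<Prod>j\<in>J. exp (- l * (mu j)\<^sup>2 / ?q))"
      by (rule prod.distrib)
    also have "(\<Prod>j\<in>J. exp (- l * (mu j)\<^sup>2 / ?q)) = exp (\<Sum>j\<in>J. - l * (mu j)\<^sup>2 / ?q)"
      using fin by (rule exp_sum[symmetric])
    also have "(\<Sum>j\<in>J. - l * (mu j)\<^sup>2 / ?q) = - l * (\<Sum>j\<in>J. (mu j)\<^sup>2) / ?q"
      by (simp only: sum_distrib_left sum_divide_distrib)
    finally show ?thesis by simp
  qed
  have "integral\<^sup>L (noise_space n d) f \<le> exp (l * a) * (\<Prod>j\<in>J. 1 / sqrt ?q * exp (- l * (mu j)\<^sup>2 / ?q))"
    by (rule chern_int[OF tau J l f0 f1 fa])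
  also have "\<dots> = exp (l * a) * exp (- l * (\<Sum>j\<in>J. (mu j)\<^sup>2) / ?q) * (1 / sqrt ?q) ^ card J"
    unfolding P by simp
  also have "\<dots> \<le> exp (l * a) * exp (- l * (\<Sum>j\<in>J. (mu j)\<^sup>2) / ?q) * exp (- real (card J) * l + real (card J) * l\<^sup>2)"
    by (rule mult_left_mono[OF inv_sqrt_pow[OF l]]) simp
  also have "\<dots> = exp (l * a - real (card J) * l + real (card J) * l\<^sup>2 - l * (\<Sum>j\<in>J. (mu j)\<^sup>2) / ?q)"
  proof -
    have "exp (l * a) * exp (- l * (\<Sum>j\<in>J. (mu j)\<^sup>2) / ?q) * exp (- real (card J) * l + real (card J) * l\<^sup>2)
       = exp (l * a + - l * (\<Sum>j\<in>J. (mu j)\<^sup>2) / ?q + (- real (card J) * l + real (card J) * l\<^sup>2))"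
      by (simp only: exp_add)
    also have "\<dots> = exp (l * a - real (card J) * l + real (card J) * l\<^sup>2 - l * (\<Sum>j\<in>J. (mu j)\<^sup>2) / ?q)"
      by (rule arg_cong[where f=exp]) (simp add: algebra_simps)
    finally show ?thesis .
  qed
  finally show ?thesis .
qed




lemma Theta_ne: "d \<ge> 1 \<Longrightarrow> r > 0 \<Longrightarrow> Theta d r \<noteq> {}"
proof -
  assume d: "d \<ge> 1" and r: "r > 0"
  let ?v = "\<lambda>j::nat. if j = 1 then r else 0"
  have "(\<Sum>j=1..d. (?v j)\<^sup>2) = r\<^sup>2"
  proof -
    have "(\<Sum>j=1..d. (?v j)\<^sup>2) = (\<Sum>j=1..d. if j = 1 then r\<^sup>2 else 0)" by (intro sum.cong) auto
    also have "\<dots> = r\<^sup>2" using d by (simp add: sum.delta)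
    finally show ?thesis .
  qed
  then have "?v \<in> Theta d r" unfolding Theta_def using d r
    by (intro CollectI bexI[of _ 1] exI[of _ "{1}"]) auto
  then show ?thesis by blast
qed

lemma Theta_sq:
  assumes "\<Delta> \<in> Theta d r" "r > 0"
  shows "r\<^sup>2 \<le> (\<Sum>j=1..d. (\<Delta> j)\<^sup>2)"
proof -
  have "r \<le> sqrt (\<Sum>j=1..d. (\<Delta> j)\<^sup>2)" using assms(1) unfolding Theta_def by auto
  then have "r\<^sup>2 \<le> (sqrt (\<Sum>j=1..d. (\<Delta> j)\<^sup>2))\<^sup>2" using assms(2) by (intro power_mono) auto
  also have "\<dots> = (\<Sum>j=1..d. (\<Delta> j)\<^sup>2)" by (simp add: sum_nonneg)
  finally show ?thesis .
qed

lemma S_bound: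
  assumes tau: "1 \<le> \<tau>" "\<tau> < n" and "\<Delta> \<in> Theta d r" "r > 0"
  shows "r\<^sup>2 * real n * hfun n \<tau> \<le> (\<Sum>j=1..d. (- cc n \<tau> * \<Delta> j)\<^sup>2)"
proof -
  have "(\<Sum>j=1..d. (- cc n \<tau> * \<Delta> j)\<^sup>2) = (cc n \<tau>)\<^sup>2 * (\<Sum>j=1..d. (\<Delta> j)\<^sup>2)"
    by (simp add: power_mult_distrib sum_distrib_left)
  also have "\<dots> \<ge> (cc n \<tau>)\<^sup>2 * r\<^sup>2" using Theta_sq[OF assms(3,4)] by (intro mult_left_mono) auto
  finally show ?thesis using cc_sq[OF tau] by (simp add: algebra_simps)
qed

lemma sqrt_exp_half: "sqrt (exp 1) = exp (1/2 :: real)"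
proof -
  have "exp (1/2 :: real) ^ 2 = exp 1" by (simp add: exp_of_nat_mult[symmetric])
  then show ?thesis by (metis exp_ge_zero real_sqrt_unique)
qed

lemma part1:
  fixes n d :: nat and \<theta> :: "nat \<Rightarrow> real" and I :: "nat set" and r c1 H :: real
  assumes n: "n \<ge> 2" and d: "d \<ge> 1" and I: "I \<subseteq> {1..n-1}" "I \<noteq> {}" and r: "r > 0"
    and c1: "0 < c1" "c1 < sqrt 2 - 1"
    and H: "H \<le> (sqrt 2 - 1 - c1) * Min ((\<lambda>\<tau>. r\<^sup>2 * real n * hfun n \<tau> / sqrt (2 * real d)) ` I)"
  shows "beta_star n d \<theta> (psi_lin n d I H) r I
              \<le> sqrt (exp 1) * exp (- c1 * Min ((\<lambda>\<tau>. r\<^sup>2 * real n * hfun n \<tau> / sqrt (2 * real d)) ` I))"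
proof -
  define D where "D = Min ((\<lambda>\<tau>. r\<^sup>2 * real n * hfun n \<tau> / sqrt (2 * real d)) ` I)"
  have finI: "finite I" using I(1) finite_subset by blast
  define s where "s = sqrt (2 * real d)"
  have s0: "s > 0" using d by (simp add: s_def)
  have s2: "s\<^sup>2 = 2 * real d" unfolding s_def by simp
  have sge: "s \<ge> sqrt 2" unfolding s_def using d by simp
  show ?thesis
    unfolding beta_star_def D_def[symmetric]
  proof (rule cSUP_least)
    show "I \<times> Theta d r \<noteq> {}" using I(2) Theta_ne[OF d r] by auto
  next
    fix x assume "x \<in> I \<times> Theta d r"
    then obtain \<tau> \<Delta> where x: "x = (\<tau>, \<Delta>)" and \<tau>I: "\<tau> \<in> I" and \<Delta>: "\<Delta> \<in> Theta d r" by auto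
    have "\<tau> \<in> {1..n-1}" using \<tau>I I(1) by blast
    then have tau: "1 \<le> \<tau>" "\<tau> < n" using n by auto
    define mu where "mu = (\<lambda>j. - cc n \<tau> * \<Delta> j)"
    define S where "S = (\<Sum>j=1..d. (mu j)\<^sup>2)"
    define l where "l = 1 / s"
    have l: "l > 0" using s0 by (simp add: l_def)
    let ?f = "\<lambda>\<xi>. 1 - psi_lin n d I H (obs \<theta> \<Delta> \<tau> \<xi>)"
    have "integral\<^sup>L (noise_space n d) ?f \<le>
       exp (l * (real d + s * H) - real (card {1..d}) * l + real (card {1..d}) * l\<^sup>2 - l * (\<Sum>j\<in>{1..d}. (mu j)\<^sup>2) / (1 + 2*l))"
    proof (rule chern_exp[OF tau _ l])
      fix \<omega>
      show "0 \<le> ?f \<omega>" "?f \<omega> \<le> 1" by (auto simp: psi_lin_def)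
      assume f: "?f \<omega> \<noteq> 0"
      then have "\<not> Max ((\<lambda>s. L_lin n d (obs \<theta> \<Delta> \<tau> \<omega>) s) ` I) > H" by (auto simp: psi_lin_def)
      moreover have "L_lin n d (obs \<theta> \<Delta> \<tau> \<omega>) \<tau> \<le> Max ((\<lambda>s. L_lin n d (obs \<theta> \<Delta> \<tau> \<omega>) s) ` I)"
        using finI \<tau>I by (intro Max_ge) auto
      ultimately have "L_lin n d (obs \<theta> \<Delta> \<tau> \<omega>) \<tau> \<le> H" by linarith
      then have "(\<Sum>j=1..d. (Zn n (obs \<theta> \<Delta> \<tau> \<omega>) \<tau> j)\<^sup>2) - real d \<le> s * H"
        unfolding L_lin_def s_def[symmetric] using s0 by (simp add: divide_le_eq mult.commute)
      moreover have "(\<Sum>j=1..d. (Zn n (obs \<theta> \<Delta> \<tau> \<omega>) \<tau> j)\<^sup>2) = (\<Sum>j\<in>{1..d}. (mu j + Wf n \<tau> j \<omega>)\<^sup>2)"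
        unfolding mu_def by (simp add: Zn_obs[OF tau])
      ultimately show "(\<Sum>j\<in>{1..d}. (mu j + Wf n \<tau> j \<omega>)\<^sup>2) \<le> real d + s * H" by linarith
    qed simp
    also have "\<dots> \<le> exp (1/2 - c1 * D)"
    proof -
      have e1: "l * (real d + s * H) - real (card {1..d}) * l + real (card {1..d}) * l\<^sup>2 = H + 1/2"
        unfolding l_def using s0 s2 d by (simp add: field_simps power2_eq_square)
      have Sb: "r\<^sup>2 * real n * hfun n \<tau> \<le> S" unfolding S_def mu_def by (rule S_bound[OF tau \<Delta> r])
      have S0: "S \<ge> 0" unfolding S_def by (simp add: sum_nonneg)
      have Dle: "D \<le> r\<^sup>2 * real n * hfun n \<tau> / s" unfolding D_def s_def using finI \<tau>I by (intro Min_le) auto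
      also have "\<dots> \<le> S / s" using Sb s0 by (simp add: divide_right_mono)
      finally have DS: "D \<le> S / s" .
      have e2: "l * S / (1 + 2*l) = S / (s + 2)" unfolding l_def using s0 by (simp add: field_simps)
      have "(sqrt 2 - 1) * (S / s) \<le> S / (s + 2)"
      proof -
        have "(sqrt 2 - 1) * (s + 2) \<le> s"
        proof -
          have a: "2 - sqrt 2 > 0" using sqrt2_less_2 by simp
          have "sqrt 2 * (2 - sqrt 2) \<le> s * (2 - sqrt 2)" using sge a by (intro mult_right_mono) auto
          moreover have "sqrt 2 * (2 - sqrt 2) = 2 * sqrt 2 - 2" by (simp add: algebra_simps)
          ultimately show ?thesis by (simp add: algebra_simps)
        qed
        then have "S * ((sqrt 2 - 1) * (s + 2)) \<le> S * s" using S0 by (rule mult_left_mono)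
        then show ?thesis using s0 by (simp add: field_simps)
      qed
      moreover have "(sqrt 2 - 1) * D \<le> (sqrt 2 - 1) * (S / s)"
        using DS by (intro mult_left_mono) auto
      ultimately have "(sqrt 2 - 1) * D \<le> l * S / (1 + 2*l)" unfolding e2 by linarith
      moreover have "H \<le> (sqrt 2 - 1 - c1) * D" using H unfolding D_def .
      then have "H \<le> (sqrt 2 - 1) * D - c1 * D" by (simp add: algebra_simps)
      ultimately have "H + 1/2 - l * S / (1 + 2*l) \<le> 1/2 - c1 * D" by linarith
      then show ?thesis unfolding e1[symmetric] S_def by simp
    qed
    also have "\<dots> = sqrt (exp 1) * exp (- c1 * D)"
      by (simp add: sqrt_exp_half exp_add[symmetric])
    finally show "(case x of (\<tau>, \<Delta>) \<Rightarrow> \<integral>\<xi>. 1 - psi_lin n d I H (obs \<theta> \<Delta> \<tau> \<xi>) \<partial>noise_space n d)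
        \<le> sqrt (exp 1) * exp (- c1 * D)" unfolding x by simp
  qed
qed




lemma part2:
  fixes n d :: nat and \<theta> :: "nat \<Rightarrow> real" and I :: "nat set" and r :: real and T :: "nat \<Rightarrow> real"
  assumes n: "n \<ge> 2" and d: "d \<ge> 1" and I: "I \<subseteq> {1..n-1}" "I \<noteq> {}" and r: "r > 0"
    and T: "\<forall>p\<in>{1..d}. T p > 0"
  shows "beta_star n d \<theta> (psi_scan n d I T) r I
                \<le> sqrt (exp 1) * exp (- Min ((\<lambda>p. Min ((\<lambda>\<tau>. (inverse (1 + sqrt (2 / real p)) *
                         (r\<^sup>2 * real n * hfun n \<tau> / (T p * sqrt (2 * real p))) - 1) * T p) ` I)) ` {1..d}))"
proof -
  define c2 where "c2 = (\<lambda>p \<tau>. inverse (1 + sqrt (2 / real p)) *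
                         (r\<^sup>2 * real n * hfun n \<tau> / (T p * sqrt (2 * real p))))"
  define MM where "MM = Min ((\<lambda>p. Min ((\<lambda>\<tau>. (c2 p \<tau> - 1) * T p) ` I)) ` {1..d})"
  have finI: "finite I" using I(1) finite_subset by blast
  have MMeq: "MM = Min ((\<lambda>p. Min ((\<lambda>\<tau>. (inverse (1 + sqrt (2 / real p)) *
                         (r\<^sup>2 * real n * hfun n \<tau> / (T p * sqrt (2 * real p))) - 1) * T p) ` I)) ` {1..d})"
    unfolding MM_def c2_def by simp
  show ?thesis
    unfolding beta_star_def MMeq[symmetric]
  proof (rule cSUP_least)
    show "I \<times> Theta d r \<noteq> {}" using I(2) Theta_ne[OF d r] by auto
  next
    fix x assume "x \<in> I \<times> Theta d r"
    then obtain \<tau> \<Delta> where x: "x = (\<tau>, \<Delta>)" and \<tau>I: "\<tau> \<in> I" and \<Delta>: "\<Delta> \<in> Theta d r" by auto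
    have "\<tau> \<in> {1..n-1}" using \<tau>I I(1) by blast
    then have tau: "1 \<le> \<tau>" "\<tau> < n" using n by auto
    from \<Delta> obtain p0 m where p0: "p0 \<in> {1..d}" and m: "m \<subseteq> {1..d}" "card m = p0"
      and \<Delta>0: "\<forall>j. j \<notin> m \<longrightarrow> \<Delta> j = 0" unfolding Theta_def by blast
    have Tp: "T p0 > 0" using T p0 by blast
    have p1: "real p0 \<ge> 1" using p0 by simp
    define mu where "mu = (\<lambda>j. - cc n \<tau> * \<Delta> j)"
    define S where "S = (\<Sum>j\<in>m. (mu j)\<^sup>2)"
    define s where "s = sqrt (2 * real p0)"
    have s0: "s > 0" using p1 by (simp add: s_def)
    have s2: "s\<^sup>2 = 2 * real p0" unfolding s_def by simp
    define l where "l = 1 / s"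
    have l: "l > 0" using s0 by (simp add: l_def)
    let ?f = "\<lambda>\<xi>. 1 - psi_scan n d I T (obs \<theta> \<Delta> \<tau> \<xi>)"
    have "integral\<^sup>L (noise_space n d) ?f \<le>
       exp (l * (real p0 + s * T p0) - real (card m) * l + real (card m) * l\<^sup>2 - l * (\<Sum>j\<in>m. (mu j)\<^sup>2) / (1 + 2*l))"
    proof (rule chern_exp[OF tau m(1) l])
      fix \<omega>
      show "0 \<le> ?f \<omega>" "?f \<omega> \<le> 1" by (auto simp: psi_scan_def)
      assume f: "?f \<omega> \<noteq> 0"
      let ?X = "obs \<theta> \<Delta> \<tau> \<omega>"
      let ?Q = "\<lambda>p m. ((\<Sum>j\<in>m. (Zn n ?X \<tau> j)\<^sup>2) - real p) / sqrt (2 * real p)"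
      let ?Ms = "\<lambda>p. {m. m \<subseteq> {1..d} \<and> card m = p}"
      have finMs: "finite (?Ms p)" for p by (rule finite_subset[of _ "Pow {1..d}"]) auto
      from f have "\<not> Max ((\<lambda>s. L_scan n d T ?X s) ` I) > 1" by (auto simp: psi_scan_def)
      moreover have "L_scan n d T ?X \<tau> \<le> Max ((\<lambda>s. L_scan n d T ?X s) ` I)"
        using finI \<tau>I by (intro Max_ge) auto
      ultimately have L1: "L_scan n d T ?X \<tau> \<le> 1" by linarith
      have "(1 / T p0) * Max ((\<lambda>m. ?Q p0 m) ` ?Ms p0) \<le> L_scan n d T ?X \<tau>"
        unfolding L_scan_def using p0 by (intro Max_ge) auto
      with L1 have "(1 / T p0) * Max ((\<lambda>m. ?Q p0 m) ` ?Ms p0) \<le> 1" by linarith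
      then have MX: "Max ((\<lambda>m. ?Q p0 m) ` ?Ms p0) \<le> T p0" using Tp by (simp add: field_simps)
      have "?Q p0 m \<le> Max ((\<lambda>m. ?Q p0 m) ` ?Ms p0)"
        using finMs m by (intro Max_ge) auto
      with MX have "?Q p0 m \<le> T p0" by linarith
      then have "(\<Sum>j\<in>m. (Zn n ?X \<tau> j)\<^sup>2) - real p0 \<le> s * T p0"
        unfolding s_def[symmetric] using s0 by (simp add: divide_le_eq mult.commute)
      moreover have "(\<Sum>j\<in>m. (Zn n ?X \<tau> j)\<^sup>2) = (\<Sum>j\<in>m. (mu j + Wf n \<tau> j \<omega>)\<^sup>2)"
        unfolding mu_def by (simp add: Zn_obs[OF tau])
      ultimately show "(\<Sum>j\<in>m. (mu j + Wf n \<tau> j \<omega>)\<^sup>2) \<le> real p0 + s * T p0" by linarith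
    qed
    also have "\<dots> \<le> exp (1/2 - MM)"
    proof -
      have e1: "l * (real p0 + s * T p0) - real (card m) * l + real (card m) * l\<^sup>2 = T p0 + 1/2"
        unfolding l_def m(2) using s0 s2 p1 by (simp add: field_simps power2_eq_square)
      have SS: "S = (\<Sum>j=1..d. (mu j)\<^sup>2)"
        unfolding S_def by (rule sum.mono_neutral_left) (use m \<Delta>0 in \<open>auto simp: mu_def\<close>)
      have Sb: "r\<^sup>2 * real n * hfun n \<tau> \<le> S" unfolding SS mu_def by (rule S_bound[OF tau \<Delta> r])
      have e2: "l * S / (1 + 2*l) = S / (s + 2)" unfolding l_def using s0 by (simp add: field_simps)
      have ss: "s * sqrt (2 / real p0) = 2"
      proof -
        have "s * sqrt (2 / real p0) = sqrt (2 * real p0 * (2 / real p0))" unfolding s_def by (simp only: real_sqrt_mult)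
        also have "\<dots> = sqrt (2\<^sup>2)" using p1 by (intro arg_cong[where f=sqrt]) (simp add: field_simps power2_eq_square)
        also have "\<dots> = 2" by simp
        finally show ?thesis .
      qed
      have c2T: "c2 p0 \<tau> * T p0 = r\<^sup>2 * real n * hfun n \<tau> / (s + 2)"
      proof -
        have "c2 p0 \<tau> * T p0 = r\<^sup>2 * real n * hfun n \<tau> / (s * (1 + sqrt (2 / real p0)))"
        proof -
          have q: "1 + sqrt (2 / real p0) > 0" by (simp add: add_pos_nonneg)
          have "c2 p0 \<tau> * T p0 = (r\<^sup>2 * real n * hfun n \<tau>) * (T p0 / T p0) / (s * (1 + sqrt (2 / real p0)))"
            unfolding c2_def s_def[symmetric] by (simp add: inverse_eq_divide mult.commute mult.left_commute mult.assoc)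
          then show ?thesis using Tp by simp
        qed
        also have "s * (1 + sqrt (2 / real p0)) = s + 2" using ss by (simp add: algebra_simps)
        finally show ?thesis .
      qed
      have "c2 p0 \<tau> * T p0 \<le> l * S / (1 + 2*l)" unfolding c2T e2 using Sb s0 by (simp add: divide_right_mono)
      moreover have "MM \<le> (c2 p0 \<tau> - 1) * T p0"
      proof -
        have "MM \<le> Min ((\<lambda>\<tau>. (c2 p0 \<tau> - 1) * T p0) ` I)" unfolding MM_def using p0 finI I(2)
          by (intro Min_le) auto
        also have "\<dots> \<le> (c2 p0 \<tau> - 1) * T p0" using finI \<tau>I by (intro Min_le) auto
        finally show ?thesis .
      qed
      moreover have "(c2 p0 \<tau> - 1) * T p0 = c2 p0 \<tau> * T p0 - T p0" by (simp add: algebra_simps)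
      ultimately have "T p0 + 1/2 - l * S / (1 + 2*l) \<le> 1/2 - MM" by linarith
      then show ?thesis unfolding e1[symmetric] S_def by simp
    qed
    also have "\<dots> = sqrt (exp 1) * exp (- MM)"
      by (simp add: sqrt_exp_half exp_add[symmetric])
    finally show "(case x of (\<tau>, \<Delta>) \<Rightarrow> \<integral>\<xi>. 1 - psi_scan n d I T (obs \<theta> \<Delta> \<tau> \<xi>) \<partial>noise_space n d)
        \<le> sqrt (exp 1) * exp (- MM)" unfolding x by simp
  qed
qed

theorem mainTheorem8:
  fixes n d :: nat and \<theta> :: "nat \<Rightarrow> real" and I :: "nat set" and r :: real
  assumes "n \<ge> 2" and "d \<ge> 1"
    and "I \<subseteq> {1..n-1}" and "I \<noteq> {}" and "r > 0"
  shows "(\<forall>c1 H. 0 < c1 \<and> c1 < sqrt 2 - 1 \<and>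
            H \<le> (sqrt 2 - 1 - c1) * Min ((\<lambda>\<tau>. r\<^sup>2 * real n * hfun n \<tau> / sqrt (2 * real d)) ` I)
          \<longrightarrow> beta_star n d \<theta> (psi_lin n d I H) r I
              \<le> sqrt (exp 1) * exp (- c1 * Min ((\<lambda>\<tau>. r\<^sup>2 * real n * hfun n \<tau> / sqrt (2 * real d)) ` I)))
       \<and> (\<forall>T :: nat \<Rightarrow> real. (\<forall>p\<in>{1..d}. T p > 0) \<longrightarrow>
            (let c2 = (\<lambda>p \<tau>. inverse (1 + sqrt (2 / real p)) *
                         (r\<^sup>2 * real n * hfun n \<tau> / (T p * sqrt (2 * real p))))
             in beta_star n d \<theta> (psi_scan n d I T) r I
                \<le> sqrt (exp 1) * exp (- Min ((\<lambda>p. Min ((\<lambda>\<tau>. (c2 p \<tau> - 1) * T p) ` I)) ` {1..d}))))"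
  using part1[OF assms] part2[OF assms] unfolding Let_def by blast


end
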